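(* Let $A\in\mathbb{R}^{n\times n}$ and $b\in\mathbb{R}^n$, and consider the generalized Newton method (GNM) for the absolute value equation $Ax-|x|-b=0$: starting from an arbitrary $x^0\in\mathbb{R}^n$, compute $x^{k+1}=[A-\mathcal{D}(x^k)]^{-1}b$ for $k=0,1,2,\dots$. Suppose that $A$ satisfies either (a) $A-I$ is an $M$-matrix, or (b) $\mathcal{N}(A^\top-I)=\mathrm{span}(v)$ for some vector $v>0$, and $A-I+D$ is an $M$-matrix for every diagonal matrix $D=\mathrm{diag}(d)$ with $d\ge 0$ and $d\neq 0$. If $A$ satisfies (b), assume in addition that $\mathcal{D}(x^0)\neq I$ and $v^\top b<0$. Then $A-\mathcal{D}(x^k)$ is an $M$-matrix for every $k=0,1,2,\dots$, and hence the GNM iteration is well defined.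
   Context: For $x\in\mathbb{R}^n$, $|x|=(|x_1|,\dots,|x_n|)^\top$, and $\mathcal{D}(x)=\mathrm{diag}(\mathrm{sign}(x))$, where $\mathrm{sign}(x)$ is the vector whose $i$th component is $-1$, $0$, or $1$ according as $x_i<0$, $x_i=0$, or $x_i>0$. A matrix is a $Z$-matrix if all its off-diagonal entries are $\le 0$; a $Z$-matrix $A$ is an $M$-matrix if $A$ is nonsingular and $A^{-1}\ge 0$ (entrywise). Vector and matrix inequalities are entrywise; $v>0$ means all entries of $v$ are strictly positive. $\mathcal{N}(X)$ denotes the null space of $X$. *)

theory Defs
  imports "HOL-Analysis.Analysis"
begin

definition diag_mat :: "real^'n \<Rightarrow> real^'n^'n" where
  "diag_mat d = (\<chi> i j. if i = j then d $ i else 0)"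

definition sign_vec :: "real^'n \<Rightarrow> real^'n" where
  "sign_vec x = (\<chi> i. sgn (x $ i))"

definition Dsign :: "real^'n \<Rightarrow> real^'n^'n" where
  "Dsign x = diag_mat (sign_vec x)"

definition Z_matrix :: "real^'n^'n \<Rightarrow> bool" where
  "Z_matrix A \<longleftrightarrow> (\<forall>i j. i \<noteq> j \<longrightarrow> A $ i $ j \<le> 0)"

definition M_matrix :: "real^'n^'n \<Rightarrow> bool" where
  "M_matrix A \<longleftrightarrow> Z_matrix A \<and> invertible A \<and> (\<forall>i j. matrix_inv A $ i $ j \<ge> 0)"

definition null_space :: "real^'n^'n \<Rightarrow> (real^'n) set" where
  "null_space X = {y. X *v y = 0}"

end

theory Submission
  imports Defs
begin

lemma inv_facts:
  fixes A :: "real^'n^'n"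
  assumes "invertible A"
  shows "A ** matrix_inv A = mat 1 \<and> matrix_inv A ** A = mat 1"
  using assms unfolding invertible_def matrix_inv_def by (rule someI_ex)

lemma monotone_Z:
  fixes B :: "real^'n^'n"
  assumes Z: "Z_matrix B" and u: "\<forall>i. u $ i > 0" and Bu: "\<forall>i. (B *v u) $ i > 0"
    and Bz: "\<forall>i. (B *v z) $ i \<ge> 0"
  shows "z $ j \<ge> 0"
proof -
  define t where "t = Min (range (\<lambda>j. z $ j / u $ j))"
  have "t \<in> range (\<lambda>j. z $ j / u $ j)" unfolding t_def by (intro Min_in) auto
  then obtain i where ti: "t = z $ i / u $ i" by auto
  have tle: "t \<le> z $ k / u $ k" for k unfolding t_def by (intro Min_le) auto
  have zk: "t * u $ k \<le> z $ k" for k using tle[of k] u by (simp add: pos_le_divide_eq)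
  have ui: "u $ i > 0" using u by blast
  have zi: "z $ i = t * u $ i" using ui by (simp add: ti)
  have "t \<ge> 0"
  proof (rule ccontr)
    assume "\<not> t \<ge> 0"
    hence tn: "t < 0" by simp
    have le: "B $ i $ k * z $ k \<le> t * (B $ i $ k * u $ k)" for k
    proof (cases "k = i")
      case True then show ?thesis using zi by simp
    next
      case False
      hence "B $ i $ k \<le> 0" using Z unfolding Z_matrix_def by auto
      hence "B $ i $ k * z $ k \<le> B $ i $ k * (t * u $ k)" using mult_left_mono_neg[OF zk[of k]] by blast
      then show ?thesis by (simp add: algebra_simps)
    qed
    have "(B *v z) $ i = (\<Sum>k\<in>UNIV. B $ i $ k * z $ k)" by (simp add: matrix_vector_mult_def)
    also have "\<dots> \<le> (\<Sum>k\<in>UNIV. t * (B $ i $ k * u $ k))" by (rule sum_mono) (rule le)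
    also have "\<dots> = t * (B *v u) $ i" by (simp add: matrix_vector_mult_def sum_distrib_left)
    also have "\<dots> < 0" using tn Bu by (simp add: mult_neg_pos)
    finally show False using Bz[rule_format, of i] by linarith
  qed
  moreover have "u $ j > 0" using u by blast
  ultimately have "t * u $ j \<ge> 0" by simp
  then show ?thesis using zk[of j] by linarith
qed

lemma M_of_Z_pos:
  fixes B :: "real^'n^'n"
  assumes Z: "Z_matrix B" and u: "\<forall>i. u $ i > 0" and Bu: "\<forall>i. (B *v u) $ i > 0"
  shows "M_matrix B"
proof -
  have inv: "invertible B"
    unfolding invertible_left_inverse matrix_left_invertible_ker
  proof (intro allI impI)
    fix z assume z0: "B *v z = 0"
    have "B *v (- z) = 0" using z0 by (simp add: vec_eq_iff matrix_vector_mult_def sum_negf)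
    have "z $ j \<ge> 0" for j using monotone_Z[OF Z u Bu, of z] z0 by simp
    moreover have "(- z) $ j \<ge> 0" for j using monotone_Z[OF Z u Bu, of "-z"] \<open>B *v (- z) = 0\<close> by simp
    ultimately show "z = 0" by (simp add: vec_eq_iff order_antisym)
  qed
  have "matrix_inv B $ i $ j \<ge> 0" for i j
  proof -
    have "B *v (matrix_inv B *v axis j 1) = axis j 1"
      using inv_facts[OF inv] by (simp add: matrix_vector_mul_assoc)
    hence "\<forall>k. (B *v (matrix_inv B *v axis j 1)) $ k \<ge> 0" by (simp add: axis_def)
    hence "(matrix_inv B *v axis j 1) $ i \<ge> 0" using monotone_Z[OF Z u Bu] by blast
    then show ?thesis by (simp add: matrix_vector_mult_basis column_def)
  qed
  then show ?thesis using Z inv unfolding M_matrix_def by blast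
qed

lemma M_plus_diag:
  fixes M :: "real^'n^'n"
  assumes M: "M_matrix M" and d: "\<forall>i. d $ i \<ge> 0"
  shows "M_matrix (M + diag_mat d)"
proof -
  have inv: "invertible M" and Z: "Z_matrix M" and nn: "\<forall>i j. matrix_inv M $ i $ j \<ge> 0"
    using M unfolding M_matrix_def by auto
  define u where "u = matrix_inv M *v (\<chi> i. 1)"
  have u: "u $ i > 0" for i
  proof -
    have ui: "u $ i = (\<Sum>k\<in>UNIV. matrix_inv M $ i $ k)" by (simp add: u_def matrix_vector_mult_def)
    have "u $ i \<ge> 0" unfolding ui by (rule sum_nonneg) (use nn in auto)
    moreover have "u $ i \<noteq> 0"
    proof
      assume "u $ i = 0"
      hence z: "matrix_inv M $ i $ k = 0" for k using ui nn sum_nonneg_eq_0_iff[of UNIV "\<lambda>k. matrix_inv M $ i $ k"] by auto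
      have "(matrix_inv M ** M) $ i $ i = 1" using inv_facts[OF inv] by (simp add: mat_def)
      moreover have "(matrix_inv M ** M) $ i $ i = 0" by (simp add: matrix_matrix_mult_def z)
      ultimately show False by simp
    qed
    ultimately show ?thesis by simp
  qed
  have Mu: "M *v u = (\<chi> i. 1)" unfolding u_def using inv_facts[OF inv] by (simp add: matrix_vector_mul_assoc)
  have Du: "(diag_mat d *v u) $ i = d $ i * u $ i" for i
  proof -
    have "(diag_mat d *v u) $ i = (\<Sum>k\<in>UNIV. (if i = k then d $ i else 0) * u $ k)"
      by (simp add: matrix_vector_mult_def diag_mat_def)
    also have "\<dots> = (\<Sum>k\<in>UNIV. if k = i then d $ i * u $ k else 0)" by (rule sum.cong) auto
    also have "\<dots> = d $ i * u $ i" by simp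
    finally show ?thesis .
  qed
  have Bu: "\<forall>i. ((M + diag_mat d) *v u) $ i > 0"
    proof
    fix i
    have e: "((M + diag_mat d) *v u) $ i = 1 + d $ i * u $ i"
      by (simp add: matrix_vector_mult_add_rdistrib Mu Du)
    have "d $ i * u $ i \<ge> 0" using d u[of i] by simp
    then show "((M + diag_mat d) *v u) $ i > 0" unfolding e by linarith
  qed
  have ZB: "Z_matrix (M + diag_mat d)" using Z unfolding Z_matrix_def diag_mat_def by auto
  show ?thesis using M_of_Z_pos[OF ZB _ Bu] u by blast
qed

lemma A_minus_D:
  fixes A :: "real^'n^'n"
  shows "A - Dsign y = A - mat 1 + diag_mat (\<chi> i. 1 - sgn (y $ i))"
  by (simp add: Dsign_def diag_mat_def sign_vec_def mat_def vec_eq_iff)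

lemma d_nonneg: "\<forall>i. (\<chi> i. 1 - sgn ((y::real^'n) $ i)) $ i \<ge> (0::real)"
  by (simp add: sgn_real_def)

theorem lemma3p1:
  fixes A :: "real^'n^'n" and b :: "real^'n" and x :: "nat \<Rightarrow> real^'n"
  assumes GNM: "\<And>k. x (Suc k) = matrix_inv (A - Dsign (x k)) *v b"
    and cond: "M_matrix (A - mat 1)
      \<or> (\<exists>v. null_space (transpose A - mat 1) = span {v} \<and> (\<forall>i. v $ i > 0)
             \<and> (\<forall>d. (\<forall>i. d $ i \<ge> 0) \<and> d \<noteq> 0 \<longrightarrow> M_matrix (A - mat 1 + diag_mat d))
             \<and> Dsign (x 0) \<noteq> mat 1 \<and> v \<bullet> b < 0)"
  shows "\<forall>k. M_matrix (A - Dsign (x k))"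
  using cond
proof
  assume "M_matrix (A - mat 1)"
  then show ?thesis unfolding A_minus_D using M_plus_diag d_nonneg by blast
next
  assume "\<exists>v. null_space (transpose A - mat 1) = span {v} \<and> (\<forall>i. v $ i > 0)
             \<and> (\<forall>d. (\<forall>i. d $ i \<ge> 0) \<and> d \<noteq> 0 \<longrightarrow> M_matrix (A - mat 1 + diag_mat d))
             \<and> Dsign (x 0) \<noteq> mat 1 \<and> v \<bullet> b < 0"
  then obtain v where ns: "null_space (transpose A - mat 1) = span {v}" and vpos: "\<forall>i. v $ i > 0"
    and MM: "\<forall>d. (\<forall>i. d $ i \<ge> 0) \<and> d \<noteq> 0 \<longrightarrow> M_matrix (A - mat 1 + diag_mat d)"
    and D0: "Dsign (x 0) \<noteq> mat 1" and vb: "v \<bullet> b < 0" by blast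
  have vA: "v v* (A - mat 1) = 0"
  proof -
    have "v \<in> null_space (transpose A - mat 1)" using ns by (simp add: span_base)
    hence "(transpose A - mat 1) *v v = 0" by (simp add: null_space_def)
    moreover have "transpose A - mat 1 = transpose (A - mat 1)"
      by (simp add: transpose_def mat_def vec_eq_iff)
    ultimately show ?thesis by simp
  qed
  have key: "M_matrix (A - Dsign y)" if "Dsign y \<noteq> mat 1" for y
  proof -
    have "(\<chi> i. 1 - sgn (y $ i)) \<noteq> (0::real^'n)"
    proof
      assume h: "(\<chi> i. 1 - sgn (y $ i)) = (0::real^'n)"
      have "Dsign y = mat 1"
      proof -
        have "sgn (y $ i) = 1" for i using arg_cong[OF h, of "\<lambda>w. w $ i"] by simp
        then show ?thesis by (simp add: Dsign_def diag_mat_def sign_vec_def mat_def vec_eq_iff)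
      qed
      with that show False by simp
    qed
    then show ?thesis unfolding A_minus_D using MM d_nonneg by blast
  qed
  have "Dsign (x k) \<noteq> mat 1" for k
  proof (induction k)
    case 0 then show ?case using D0 .
  next
    case (Suc k)
    show ?case
    proof
      assume h: "Dsign (x (Suc k)) = mat 1"
      have pos: "x (Suc k) $ i > 0" for i
      proof -
        have "Dsign (x (Suc k)) $ i $ i = 1" using h by (simp add: mat_def)
        hence "sgn (x (Suc k) $ i) = 1" by (simp add: Dsign_def diag_mat_def sign_vec_def)
        then show ?thesis by (simp add: sgn_real_def split: if_splits)
      qed
      have Mk: "M_matrix (A - Dsign (x k))" using key Suc.IH by blast
      hence "invertible (A - Dsign (x k))" by (simp add: M_matrix_def)
      hence ii: "(A - Dsign (x k)) ** matrix_inv (A - Dsign (x k)) = mat 1" using inv_facts by blast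
      have eq: "(A - Dsign (x k)) *v x (Suc k) = b"
        unfolding GNM[of k] matrix_vector_mul_assoc ii by simp
      let ?d = "(\<chi> i. 1 - sgn (x k $ i)) :: real^'n"
      have "b = (A - mat 1) *v x (Suc k) + diag_mat ?d *v x (Suc k)"
        using eq unfolding A_minus_D by (simp only: matrix_vector_mult_add_rdistrib)
      hence "v \<bullet> b = v \<bullet> ((A - mat 1) *v x (Suc k)) + v \<bullet> (diag_mat ?d *v x (Suc k))"
        by (simp add: inner_add_right)
      also have "v \<bullet> ((A - mat 1) *v x (Suc k)) = (v v* (A - mat 1)) \<bullet> x (Suc k)"
        by (simp add: dot_lmul_matrix)
      also have "\<dots> = 0" using vA by simp
      finally have vb2: "v \<bullet> b = v \<bullet> (diag_mat ?d *v x (Suc k))" by simp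
      have "v \<bullet> (diag_mat ?d *v x (Suc k)) \<ge> 0"
        unfolding inner_vec_def
      proof (rule sum_nonneg)
        fix i :: 'n
        have "(diag_mat ?d *v x (Suc k)) $ i = (\<Sum>j\<in>UNIV. (if i = j then ?d $ i else 0) * x (Suc k) $ j)"
          by (simp add: matrix_vector_mult_def diag_mat_def)
        also have "\<dots> = (\<Sum>j\<in>UNIV. if j = i then ?d $ i * x (Suc k) $ j else 0)" by (rule sum.cong) auto
        also have "\<dots> = ?d $ i * x (Suc k) $ i" by simp
        finally have "(diag_mat ?d *v x (Suc k)) $ i = ?d $ i * x (Suc k) $ i" .
        moreover have "?d $ i \<ge> 0" using d_nonneg by blast
        ultimately show "v $ i \<bullet> (diag_mat ?d *v x (Suc k)) $ i \<ge> 0"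
          using vpos pos[of i] by (simp add: less_imp_le)
      qed
      with vb vb2 show False by simp
    qed
  qed
  then show ?thesis using key by blast
qed

end
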